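(* Consider the scheme (EQRF1) $$y_{n+1}=e^{\tau A}y_n+\tau\varphi_1(\tau A)\,h\bigl((t_n+c_1\tau)^r\bigr),\qquad n=0,\dots,N-1,$$ started from the exact initial value $y_0$, with a collocation point $c_1\in[0,1]$, and let $\epsilon_n=y(t_n)-y_n$. Then: \begin{enumerate} \item if $h$ is differentiable on $[0,\infty)$ with bounded derivative, then $\|\epsilon_n\|\le C\tau$; \item if $h$ is twice differentiable on $[0,\infty)$ with bounded derivatives $h',h''$, if $h'(x)\in\mathcal{D}(A)$ for all $x\ge0$ with $x\mapsto Ah'(x)$ bounded, and if $c_1=\tfrac12$, then $\|\epsilon_n\|\le C\tau^{1+r}$. \end{enumerate} In both cases the bound holds for all $N\in\mathbb{N}$ and all $0\le n\le N$, with a constant $C$ that may depend on $T$, $r$, $h$ and the semigroup bound, but not on $n$ or $\tau$.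
   Context: $(X,\|\cdot\|)$ is a Banach space and $A:\mathcal{D}(A)\subset X\to X$ is a linear operator generating a strongly continuous semigroup $\{e^{tA}\}_{t\ge0}$ on $X$. Fix $T>0$, $0<r<1$, $y_0\in X$ and $h:[0,\infty)\to X$. The problem is $y'(t)=Ay(t)+h(t^r)$, $y(0)=y_0$, $t\in[0,T]$, whose (mild) solution is given by the variation-of-constants formula $y(t)=e^{tA}y_0+\int_0^te^{(t-s)A}h(s^r)\,ds$; equivalently $y(t_{n+1})=e^{\tau A}y(t_n)+\int_0^\tau e^{(\tau-s)A}h((t_n+s)^r)\,ds$. Time grid: $N\in\mathbb{N}$, $\tau=T/N$, $t_n=n\tau$. The operator $\varphi_1(\tau A)$ is defined by $\tau\varphi_1(\tau A)v=\int_0^\tau e^{(\tau-s)A}v\,ds$ for $v\in X$. *)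

theory Defs
  imports "HOL-Analysis.Analysis"
begin

definition strongly_continuous_semigroup :: "(real \<Rightarrow> 'a::banach \<Rightarrow> 'a) \<Rightarrow> bool" where
  "strongly_continuous_semigroup S \<longleftrightarrow>
     (\<forall>t\<ge>0. bounded_linear (S t)) \<and>
     S 0 = id \<and>
     (\<forall>t\<ge>0. \<forall>s\<ge>0. S (t + s) = S t \<circ> S s) \<and>
     (\<forall>x. ((\<lambda>t. S t x) \<longlongrightarrow> x) (at_right 0))"

definition semigroup_generator ::
    "(real \<Rightarrow> 'a::banach \<Rightarrow> 'a) \<Rightarrow> 'a set \<Rightarrow> ('a \<Rightarrow> 'a) \<Rightarrow> bool" where
  "semigroup_generator S D A \<longleftrightarrow>
     D = {x. \<exists>y. ((\<lambda>t. (1 / t) *\<^sub>R (S t x - x)) \<longlongrightarrow> y) (at_right 0)} \<and>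
     (\<forall>x\<in>D. ((\<lambda>t. (1 / t) *\<^sub>R (S t x - x)) \<longlongrightarrow> A x) (at_right 0))"

text \<open>phi_1(tau A) v, defined by  tau phi_1(tau A) v = int_0^tau e^{(tau-s)A} v ds.\<close>
definition phi1 :: "(real \<Rightarrow> 'a::banach \<Rightarrow> 'a) \<Rightarrow> real \<Rightarrow> 'a \<Rightarrow> 'a" where
  "phi1 S \<tau> v = (1 / \<tau>) *\<^sub>R integral {0..\<tau>} (\<lambda>s. S (\<tau> - s) v)"

text \<open>Mild solution of y' = A y + h(t^r), y(0) = y0 (variation-of-constants formula).\<close>
definition mild_sol :: "(real \<Rightarrow> 'a::banach \<Rightarrow> 'a) \<Rightarrow> (real \<Rightarrow> 'a) \<Rightarrow> real \<Rightarrow> 'a \<Rightarrow> real \<Rightarrow> 'a" where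
  "mild_sol S h r y0 t = S t y0 + integral {0..t} (\<lambda>s. S (t - s) (h (s powr r)))"

primrec eqrf1 :: "(real \<Rightarrow> 'a::banach \<Rightarrow> 'a) \<Rightarrow> (real \<Rightarrow> 'a) \<Rightarrow> real \<Rightarrow> real \<Rightarrow> real \<Rightarrow> 'a \<Rightarrow> nat \<Rightarrow> 'a" where
  "eqrf1 S h r c1 \<tau> y0 0 = y0"
| "eqrf1 S h r c1 \<tau> y0 (Suc n) =
     S \<tau> (eqrf1 S h r c1 \<tau> y0 n) + \<tau> *\<^sub>R phi1 S \<tau> (h ((real n * \<tau> + c1 * \<tau>) powr r))"

end

theory Submission
  imports Defs
begin

lemma banach_steinhaus:
  fixes F :: "('a::banach \<Rightarrow> 'b::real_normed_vector) set"
  assumes lin: "\<And>f. f \<in> F \<Longrightarrow> bounded_linear f"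
    and pw: "\<And>x. \<exists>B. \<forall>f\<in>F. norm (f x) \<le> B"
  shows "\<exists>M. \<forall>f\<in>F. \<forall>x. norm (f x) \<le> M * norm x"
proof -
  define E where "E k = {x. \<forall>f\<in>F. norm (f x) \<le> real k}" for k :: nat
  have clE: "closed (E k)" for k
  proof -
    have "E k = (\<Inter>f\<in>F. {x. norm (f x) \<le> real k})" unfolding E_def by auto
    moreover have "closed {x. norm (f x) \<le> real k}" if "f \<in> F" for f
    proof -
      have "continuous_on UNIV f" using lin[OF that] linear_continuous_on by blast
      then have "continuous_on UNIV (\<lambda>x. norm (f x))" by (intro continuous_intros)
      then show ?thesis by (intro closed_Collect_le) auto
    qed
    ultimately show ?thesis by auto
  qed
  have UE: "\<Union>(range E) = UNIV"
  proof safe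
    fix x
    obtain B where B: "\<forall>f\<in>F. norm (f x) \<le> B" using pw by blast
    have "B \<le> real (nat \<lceil>B\<rceil>)" by linarith
    then have "x \<in> E (nat \<lceil>B\<rceil>)" unfolding E_def using B by force
    then show "x \<in> \<Union>(range E)" by blast
  qed auto
  have "\<exists>k. interior (E k) \<noteq> {}"
  proof (rule ccontr)
    assume "\<not> ?thesis"
    then have "euclidean interior_of \<Union>(range E) = {}"
      by (intro Baire_category_alt) (auto simp: completely_metrizable_space_euclidean clE)
    then show False using UE by simp
  qed
  then obtain k x0 where "x0 \<in> interior (E k)" by blast
  then obtain e where e: "e > 0" "ball x0 e \<subseteq> E k"
    using mem_interior by blast
  have "norm (f y) \<le> (4 * real k / e) * norm y" if f: "f \<in> F" for f y
  proof (cases "y = 0")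
    case True
    then show ?thesis using lin[OF f] linear_0 bounded_linear.linear by fastforce
  next
    case False
    define c where "c = e / 2 / norm y"
    have c: "c > 0" using False e by (simp add: c_def)
    have nz: "norm (c *\<^sub>R y) = e / 2" using False e by (simp add: c_def)
    have "x0 + c *\<^sub>R y \<in> ball x0 e" using nz e by (simp add: dist_norm)
    then have "x0 + c *\<^sub>R y \<in> E k" using e by blast
    then have 1: "norm (f (x0 + c *\<^sub>R y)) \<le> real k" using f unfolding E_def by auto
    have "x0 \<in> ball x0 e" using e by simp
    then have "x0 \<in> E k" using e by blast
    then have 2: "norm (f x0) \<le> real k" using f unfolding E_def by auto
    have lf: "linear f" using lin[OF f] bounded_linear.linear by blast
    have "f (c *\<^sub>R y) = f (x0 + c *\<^sub>R y) - f x0" using lf by (simp add: linear_add)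
    then have "norm (f (c *\<^sub>R y)) \<le> 2 * real k" using 1 2 norm_triangle_ineq4
      by (smt (verit))
    then have "c * norm (f y) \<le> 2 * real k" using lf c by (simp add: linear_scale)
    then have "norm (f y) \<le> 2 * real k / c" using c by (simp add: field_simps)
    also have "2 * real k / c = (4 * real k / e) * norm y" using False e by (simp add: c_def field_simps)
    finally show ?thesis .
  qed
  then show ?thesis by blast
qed

lemma lip_deriv:
  fixes f f' :: "real \<Rightarrow> 'b::real_normed_vector"
  assumes d: "\<forall>x\<ge>0. (f has_vector_derivative f' x) (at x within {0..})"
    and b: "\<And>x. x \<ge> 0 \<Longrightarrow> norm (f' x) \<le> B" and x: "x \<ge> 0" and y: "y \<ge> 0"
  shows "norm (f x - f y) \<le> B * \<bar>x - y\<bar>"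
proof -
  have "norm (f x - f y) \<le> B * norm (x - y)"
  proof (rule differentiable_bound[where S="{0..}" and f'="\<lambda>x t. t *\<^sub>R f' x"])
    show "convex {0::real..}" by (simp add: convex_real_interval)
    fix z :: real assume z: "z \<in> {0..}"
    then show "(f has_derivative (\<lambda>t. t *\<^sub>R f' z)) (at z within {0..})"
      using d by (simp add: has_vector_derivative_def)
    have "onorm (\<lambda>t::real. t *\<^sub>R f' z) = onorm (\<lambda>t::real. t) * norm (f' z)"
      by (rule onorm_scaleR_left) (rule bounded_linear_ident)
    then show "onorm (\<lambda>t::real. t *\<^sub>R f' z) \<le> B" using b[of z] z by (simp add: onorm_id)
  qed (use x y in auto)
  then show ?thesis by simp
qed

lemma powr_diff_le:
  fixes a b x y r :: real
  assumes "0 \<le> a" "x \<in> {a..b}" "y \<in> {a..b}" "0 \<le> r"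
  shows "\<bar>x powr r - y powr r\<bar> \<le> b powr r - a powr r"
proof -
  have "a powr r \<le> x powr r" "x powr r \<le> b powr r" "a powr r \<le> y powr r" "y powr r \<le> b powr r"
    using assms by (auto intro!: powr_mono2)
  then show ?thesis by linarith
qed

lemma powr_diff_le_neg:
  fixes a b x y r :: real
  assumes "0 < a" "x \<in> {a..b}" "y \<in> {a..b}" "r \<le> 0"
  shows "\<bar>x powr r - y powr r\<bar> \<le> a powr r - b powr r"
proof -
  have "x powr r \<le> a powr r" "b powr r \<le> x powr r" "y powr r \<le> a powr r" "b powr r \<le> y powr r"
    using assms by (auto intro!: powr_mono2')
  then show ?thesis by linarith
qed

lemma int_bound:
  fixes f :: "real \<Rightarrow> 'b::real_normed_vector"
  assumes "f integrable_on {0..\<tau>}" "\<tau> \<ge> 0" "\<And>s. s \<in> {0..\<tau>} \<Longrightarrow> norm (f s) \<le> B"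
  shows "norm (integral {0..\<tau>} f) \<le> \<tau> * B"
proof -
  have B: "B \<ge> 0" using assms(3)[of 0] assms(2) by (meson atLeastAtMost_iff norm_ge_zero order_trans order_refl)
  have "norm (integral {0..\<tau>} f) \<le> B * Henstock_Kurzweil_Integration.content {0..\<tau>}"
    by (rule has_integral_bound_real[where S="{}"]) (use assms B in auto)
  then show ?thesis using assms(2) by (simp add: mult.commute)
qed

context
  fixes S :: "real \<Rightarrow> 'a::banach \<Rightarrow> 'a"
  assumes sg: "strongly_continuous_semigroup S"
begin

lemma sg_lin: "t \<ge> 0 \<Longrightarrow> bounded_linear (S t)"
  using sg unfolding strongly_continuous_semigroup_def by blast

lemma sg_0: "S 0 x = x"
  using sg unfolding strongly_continuous_semigroup_def by simp

lemma sg_add: "t \<ge> 0 \<Longrightarrow> s \<ge> 0 \<Longrightarrow> S (t + s) x = S t (S s x)"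
  using sg unfolding strongly_continuous_semigroup_def by simp

lemma sg_tendsto: "((\<lambda>t. S t x) \<longlongrightarrow> x) (at_right 0)"
  using sg unfolding strongly_continuous_semigroup_def by blast

lemma sg_diff: "t \<ge> 0 \<Longrightarrow> S t (x - y) = S t x - S t y"
  using sg_lin bounded_linear.linear linear_diff by blast

lemma sg_plus: "t \<ge> 0 \<Longrightarrow> S t (x + y) = S t x + S t y"
  using sg_lin bounded_linear.linear linear_add by blast

lemma sg_scale: "t \<ge> 0 \<Longrightarrow> S t (c *\<^sub>R x) = c *\<^sub>R S t x"
  using sg_lin bounded_linear.linear linear_scale by blast

lemma sg_zero: "t \<ge> 0 \<Longrightarrow> S t 0 = 0"
  using sg_lin bounded_linear.linear linear_0 by blast

lemma sg_near: "\<exists>b>0. \<forall>h. 0 < h \<and> h < b \<longrightarrow> norm (S h x - x) < e" if "e > 0"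
proof -
  have "eventually (\<lambda>t. dist (S t x) x < e) (at_right 0)"
    using sg_tendsto[of x] that unfolding tendsto_iff by blast
  then obtain b where "b > 0" "\<forall>y>0. y < b \<longrightarrow> dist (S y x) x < e"
    unfolding eventually_at_right_field by auto
  then show ?thesis by (auto simp: dist_norm)
qed

lemma sg_local_bound: "\<exists>\<delta>>0. \<exists>M. \<forall>t\<in>{0..\<delta>}. \<forall>x. norm (S t x) \<le> M * norm x"
proof (rule ccontr)
  assume H: "\<not> ?thesis"
  have "\<forall>n::nat. \<exists>t x. t \<in> {0..1 / Suc n} \<and> norm (S t x) > real n * norm x"
  proof
    fix n :: nat
    have "(1::real) / Suc n > 0" by simp
    then have "\<not> (\<forall>t\<in>{0..1/Suc n}. \<forall>x. norm (S t x) \<le> real n * norm x)"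
      using H by blast
    then show "\<exists>t x. t \<in> {0..1 / Suc n} \<and> norm (S t x) > real n * norm x"
      by (auto simp: not_le)
  qed
  then obtain tt xx where tt: "\<And>n. tt n \<in> {0..1 / Suc n}"
    and xx: "\<And>n. norm (S (tt n) (xx n)) > real n * norm (xx n)"
    by metis
  have "\<exists>M. \<forall>f\<in>range (\<lambda>n. S (tt n)). \<forall>x. norm (f x) \<le> M * norm x"
  proof (rule banach_steinhaus)
    fix f assume "f \<in> range (\<lambda>n. S (tt n))"
    then show "bounded_linear f" using sg_lin tt by auto
  next
    fix x
    obtain b where b: "b > 0" "\<forall>h. 0 < h \<and> h < b \<longrightarrow> norm (S h x - x) < 1"
      using sg_near[of 1 x] by auto
    define K where "K = nat \<lceil>1 / b\<rceil>"
    define B where "B = norm x + 1 + (\<Sum>n<K. norm (S (tt n) x))"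
    have "norm (S (tt n) x) \<le> B" for n
    proof (cases "n < K")
      case True
      have "norm (S (tt n) x) \<le> (\<Sum>n<K. norm (S (tt n) x))"
        using True by (intro member_le_sum) auto
      moreover have "norm x + 1 \<ge> 0" by simp
      ultimately show ?thesis unfolding B_def by linarith
    next
      case False
      then have "real n \<ge> 1 / b" unfolding K_def by linarith
      then have "real n * b \<ge> 1" using b by (simp add: field_simps)
      then have "real (Suc n) * b > 1" using b by (simp add: algebra_simps)
      then have "1 / real (Suc n) < b" using b by (simp add: field_simps)
      then have tb: "tt n < b" using tt[of n] by auto
      have "norm (S (tt n) x) \<le> norm x + 1"
      proof (cases "tt n = 0")
        case True then show ?thesis by (simp add: sg_0)
      next
        case False
        then have "norm (S (tt n) x - x) < 1" using b tb tt[of n] by auto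
        then show ?thesis using norm_triangle_ineq2[of "S (tt n) x" x] by linarith
      qed
      moreover have "(\<Sum>n<K. norm (S (tt n) x)) \<ge> 0" by (intro sum_nonneg) auto
      ultimately show ?thesis unfolding B_def by linarith
    qed
    then show "\<exists>B. \<forall>f\<in>range (\<lambda>n. S (tt n)). norm (f x) \<le> B" by blast
  qed
  then obtain M where M: "\<And>n x. norm (S (tt n) x) \<le> M * norm x" by blast
  define n where "n = nat \<lceil>M\<rceil> + 1"
  have nM: "real n > M" unfolding n_def by linarith
  have "real n * norm (xx n) < M * norm (xx n)" using xx[of n] M[of n "xx n"] by linarith
  then have "(real n - M) * norm (xx n) < 0" by (simp add: algebra_simps)
  moreover have "(real n - M) * norm (xx n) \<ge> 0" using nM by simp
  ultimately show False by linarith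
qed

lemma sg_bound: "\<exists>M\<ge>1. \<forall>t\<in>{0..L}. \<forall>x. norm (S t x) \<le> M * norm x"
proof -
  obtain \<delta> M0 where d: "\<delta> > 0" and M0: "\<And>t x. t \<in> {0..\<delta>} \<Longrightarrow> norm (S t x) \<le> M0 * norm x"
    using sg_local_bound by blast
  define M1 where "M1 = max 1 M0"
  have M1: "M1 \<ge> 1" "M0 \<le> M1" unfolding M1_def by auto
  have M1b: "\<And>t x. t \<in> {0..\<delta>} \<Longrightarrow> norm (S t x) \<le> M1 * norm x"
    using M0 M1 by (meson mult_right_mono norm_ge_zero order_trans)
  have ind: "\<forall>t\<in>{0..real k * \<delta>}. \<forall>x. norm (S t x) \<le> M1 ^ k * norm x" for k
  proof (induction k)
    case 0
    then show ?case by (auto simp: sg_0)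
  next
    case (Suc k)
    show ?case
    proof (intro ballI allI)
      fix t x assume t: "t \<in> {0..real (Suc k) * \<delta>}"
      show "norm (S t x) \<le> M1 ^ Suc k * norm x"
      proof (cases "t \<le> \<delta>")
        case True
        then have "norm (S t x) \<le> M1 * norm x" using M1b t by auto
        also have "\<dots> \<le> M1 ^ Suc k * norm x"
          using M1 by (intro mult_right_mono) (auto simp: power_increasing[of 1 "Suc k" M1, simplified])
        finally show ?thesis .
      next
        case False
        have t1: "t - \<delta> \<in> {0..real k * \<delta>}" using t False by (auto simp: algebra_simps)
        have "S t x = S (t - \<delta>) (S \<delta> x)" using sg_add[of "t - \<delta>" \<delta> x] False d by simp
        then have "norm (S t x) \<le> M1 ^ k * norm (S \<delta> x)" using Suc.IH t1 by auto
        also have "\<dots> \<le> M1 ^ k * (M1 * norm x)"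
          using M1b[of \<delta> x] d M1 by (intro mult_left_mono) auto
        finally show ?thesis by (simp add: algebra_simps)
      qed
    qed
  qed
  define k where "k = nat \<lceil>L / \<delta>\<rceil>"
  have "L / \<delta> \<le> real k" unfolding k_def by linarith
  then have "L \<le> real k * \<delta>" using d by (simp add: field_simps)
  then have "\<forall>t\<in>{0..L}. \<forall>x. norm (S t x) \<le> M1 ^ k * norm x" using ind[of k] by auto
  moreover have "M1 ^ k \<ge> 1" using M1 by simp
  ultimately show ?thesis by blast
qed

lemma sg_cont: "continuous_on {0..} (\<lambda>t. S t x)"
  unfolding continuous_on_iff
proof (intro ballI allI impI)
  fix t e :: real assume t: "t \<in> {0..}" and e: "e > 0"
  obtain M where M: "M \<ge> 1" "\<And>s y. s \<in> {0..t+1} \<Longrightarrow> norm (S s y) \<le> M * norm y"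
    using sg_bound[of "t+1"] by blast
  obtain b where b: "b > 0" "\<And>h. 0 < h \<and> h < b \<Longrightarrow> norm (S h x - x) < e / M"
    using sg_near[of "e/M" x] e M by auto
  show "\<exists>d>0. \<forall>t'\<in>{0..}. dist t' t < d \<longrightarrow> dist (S t' x) (S t x) < e"
  proof (intro exI[of _ "min 1 b"] conjI ballI impI)
    show "min 1 b > 0" using b by simp
    fix t' assume t': "t' \<in> {0..}" and dt: "dist t' t < min 1 b"
    show "dist (S t' x) (S t x) < e"
    proof (cases "t' = t")
      case True then show ?thesis using e by simp
    next
      case False
      show ?thesis
      proof (cases "t' > t")
        case True
        define h where "h = t' - t"
        have h: "0 < h" "h < b" using True dt by (auto simp: h_def dist_real_def)
        have "S t' x = S t (S h x)" using sg_add[of t h x] t h by (simp add: h_def)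
        then have "S t' x - S t x = S t (S h x - x)" using sg_diff t by simp
        then have "norm (S t' x - S t x) \<le> M * norm (S h x - x)" using M(2)[of t] t by auto
        also have "\<dots> < M * (e / M)" using b(2)[of h] h M by (intro mult_strict_left_mono) auto
        finally show ?thesis using M by (simp add: dist_norm)
      next
        case False
        define h where "h = t - t'"
        have h: "0 < h" "h < b" using False \<open>t' \<noteq> t\<close> dt by (auto simp: h_def dist_real_def)
        have "S t x = S t' (S h x)" using sg_add[of t' h x] t' h by (simp add: h_def)
        then have "S t' x - S t x = S t' (x - S h x)" using sg_diff t' by simp
        then have "norm (S t' x - S t x) \<le> M * norm (x - S h x)" using M(2)[of t'] t' False by auto
        also have "\<dots> < M * (e / M)" using b(2)[of h] h M
          by (intro mult_strict_left_mono) (auto simp: norm_minus_commute)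
        finally show ?thesis using M by (simp add: dist_norm)
      qed
    qed
  qed
qed

lemma sg_joint_cont:
  fixes U :: "real set" and f :: "real \<Rightarrow> 'a"
  assumes f: "continuous_on U f" and p: "continuous_on U p" and pr: "\<And>s. s \<in> U \<Longrightarrow> p s \<in> {0..L}"
  shows "continuous_on U (\<lambda>s. S (p s) (f s))"
  unfolding continuous_on_iff
proof (intro ballI allI impI)
  fix s e :: real assume s: "s \<in> U" and e: "e > 0"
  obtain M where M: "M \<ge> 1" "\<And>t y. t \<in> {0..L} \<Longrightarrow> norm (S t y) \<le> M * norm y"
    using sg_bound[of L] by blast
  have c2: "continuous_on U (\<lambda>s'. S (p s') (f s))"
    by (rule continuous_on_compose2[OF sg_cont p]) (use pr in auto)
  have eM: "e / (2*M) > 0" using e M by simp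
  obtain d1 where d1: "d1 > 0" "\<And>s'. s' \<in> U \<Longrightarrow> dist s' s < d1 \<Longrightarrow> dist (f s') (f s) < e / (2*M)"
    using f s eM unfolding continuous_on_iff by blast
  have e2: "e / 2 > 0" using e by simp
  obtain d2 where d2: "d2 > 0" "\<And>s'. s' \<in> U \<Longrightarrow> dist s' s < d2 \<Longrightarrow> dist (S (p s') (f s)) (S (p s) (f s)) < e / 2"
    using c2 s e2 unfolding continuous_on_iff by blast
  show "\<exists>d>0. \<forall>s'\<in>U. dist s' s < d \<longrightarrow> dist (S (p s') (f s')) (S (p s) (f s)) < e"
  proof (intro exI[of _ "min d1 d2"] conjI ballI impI)
    show "min d1 d2 > 0" using d1 d2 by simp
    fix s' assume s': "s' \<in> U" and ds: "dist s' s < min d1 d2"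
    have ps: "p s' \<in> {0..L}" using pr s' by auto
    have "S (p s') (f s') - S (p s) (f s) = S (p s') (f s' - f s) + (S (p s') (f s) - S (p s) (f s))"
      using sg_diff[of "p s'"] ps by simp
    then have "norm (S (p s') (f s') - S (p s) (f s)) \<le> norm (S (p s') (f s' - f s)) + norm (S (p s') (f s) - S (p s) (f s))"
      by (metis norm_triangle_ineq)
    also have "\<dots> < M * (e / (2*M)) + e / 2"
    proof (rule add_le_less_mono)
      have "norm (S (p s') (f s' - f s)) \<le> M * norm (f s' - f s)" using M(2) ps by auto
      also have "\<dots> \<le> M * (e / (2*M))" using d1(2)[OF s'] ds M by (intro mult_left_mono) (auto simp: dist_norm)
      finally show "norm (S (p s') (f s' - f s)) \<le> M * (e / (2*M))" .
      show "norm (S (p s') (f s) - S (p s) (f s)) < e / 2" using d2(2)[OF s'] ds by (auto simp: dist_norm)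
    qed
    also have "\<dots> = e" using M by (simp add: field_simps)
    finally show "dist (S (p s') (f s')) (S (p s) (f s)) < e" by (simp add: dist_norm)
  qed
qed

lemma sg_gen_lip:
  assumes gen: "semigroup_generator S D A" and u: "u \<in> D"
    and M: "M \<ge> 0" "\<And>s y. s \<in> {0..L} \<Longrightarrow> norm (S s y) \<le> M * norm y"
    and t: "t \<in> {0..L}"
  shows "norm (S t u - u) \<le> M * t * norm (A u)"
proof (cases "t = 0")
  case True then show ?thesis by (simp add: sg_0)
next
  case False
  then have tp: "t > 0" using t by auto
  define q where "q s = (1 / s) *\<^sub>R (S s u - u)" for s
  have qA: "(q \<longlongrightarrow> A u) (at_right 0)" using gen u unfolding semigroup_generator_def q_def by blast
  define \<sigma> where "\<sigma> n = t / real (Suc n)" for n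
  have s0: "\<sigma> \<longlonglongrightarrow> 0" unfolding \<sigma>_def using LIMSEQ_Suc[OF lim_const_over_n[of t]] by simp
  have sp: "\<sigma> n > 0" for n using tp by (simp add: \<sigma>_def)
  have "filterlim \<sigma> (at_right 0) sequentially"
    by (rule tendsto_imp_filterlim_at_right[OF s0]) (use sp in auto)
  then have "((\<lambda>n. q (\<sigma> n)) \<longlongrightarrow> A u) sequentially" using qA filterlim_compose by blast
  then have lim: "((\<lambda>n. M * t * norm (q (\<sigma> n))) \<longlongrightarrow> M * t * norm (A u)) sequentially"
    by (intro tendsto_intros)
  have bnd: "norm (S t u - u) \<le> M * t * norm (q (\<sigma> n))" for n
  proof -
    define N where "N = Suc n"
    define s where "s = \<sigma> n"
    have sN: "real N * s = t" unfolding N_def s_def \<sigma>_def by simp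
    have s0': "s > 0" using sp by (simp add: s_def)
    have "(\<Sum>j<N. S (real (Suc j) * s) u - S (real j * s) u) = S (real N * s) u - S (real 0 * s) u"
      by (rule sum_lessThan_telescope)
    then have eq: "S t u - u = (\<Sum>j<N. S (real (Suc j) * s) u - S (real j * s) u)" using sN by (simp add: sg_0)
    have trm: "norm (S (real (Suc j) * s) u - S (real j * s) u) \<le> M * norm (S s u - u)" if j: "j < N" for j
    proof -
      have js: "real j * s \<ge> 0" using s0' by simp
      have "real j * s \<le> t" using j sN s0' by (metis less_imp_of_nat_less less_eq_real_def mult_strict_right_mono)
      then have jL: "real j * s \<in> {0..L}" using js t by auto
      have "S (real (Suc j) * s) u = S (real j * s) (S s u)"
        using sg_add[OF js, of s u] s0' by (simp add: algebra_simps)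
      then have "S (real (Suc j) * s) u - S (real j * s) u = S (real j * s) (S s u - u)"
        using sg_diff js by simp
      then show ?thesis using M(2)[OF jL] by simp
    qed
    have "norm (S t u - u) \<le> (\<Sum>j<N. norm (S (real (Suc j) * s) u - S (real j * s) u))"
      unfolding eq by (rule norm_sum)
    also have "\<dots> \<le> (\<Sum>j<N. M * norm (S s u - u))" by (intro sum_mono trm) auto
    also have "\<dots> = real N * M * norm (S s u - u)" by simp
    also have "\<dots> = M * t * norm (q s)"
    proof -
      have "norm (q s) = norm (S s u - u) / s" unfolding q_def using s0' by simp
      then show ?thesis using s0' sN[symmetric] by (simp add: field_simps)
    qed
    finally show ?thesis unfolding s_def .
  qed
  show ?thesis
    by (rule tendsto_le[OF _ lim tendsto_const]) (use bnd in auto)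
qed

lemma sg_gen_lip2:
  assumes gen: "semigroup_generator S D A" and u: "u \<in> D"
    and M: "M \<ge> 0" "\<And>s y. s \<in> {0..L} \<Longrightarrow> norm (S s y) \<le> M * norm y"
    and a: "a \<in> {0..L}" and b: "b \<in> {0..L}"
  shows "norm (S a u - S b u) \<le> M * M * \<bar>a - b\<bar> * norm (A u)"
proof -
  have *: "norm (S a u - S b u) \<le> M * M * (a - b) * norm (A u)" if ab: "b \<le> a" "a \<in> {0..L}" "b \<in> {0..L}" for a b
  proof -
    have "S a u = S b (S (a - b) u)" using sg_add[of b "a - b" u] ab by simp
    then have "S a u - S b u = S b (S (a - b) u - u)" using sg_diff ab by simp
    then have "norm (S a u - S b u) \<le> M * norm (S (a - b) u - u)" using M(2) ab by simp
    also have "\<dots> \<le> M * (M * (a - b) * norm (A u))"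
      using sg_gen_lip[OF gen u M, of "a - b"] ab M by (intro mult_left_mono) auto
    finally show ?thesis by (simp add: algebra_simps)
  qed
  show ?thesis
  proof (cases "b \<le> a")
    case True then show ?thesis using *[OF True a b] by simp
  next
    case False
    then have "norm (S b u - S a u) \<le> M * M * (b - a) * norm (A u)" using *[of a b] a b by simp
    then show ?thesis using False by (simp add: norm_minus_commute)
  qed
qed

lemma mild_step:
  assumes hc: "continuous_on {0..} (\<lambda>s. h (s powr r))" and t: "t \<ge> 0" and tau: "\<tau> \<ge> 0"
  shows "mild_sol S h r y0 (t + \<tau>) = S \<tau> (mild_sol S h r y0 t) + integral {0..\<tau>} (\<lambda>s. S (\<tau> - s) (h ((t + s) powr r)))"
proof -
  define G where "G s = h (s powr r)" for s
  define F where "F s = S (t + \<tau> - s) (G s)" for s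
  have Gc: "continuous_on U G" if "U \<subseteq> {0..}" for U
    using continuous_on_subset[OF hc that] unfolding G_def .
  have Fc: "continuous_on {0..t+\<tau>} F" unfolding F_def
    by (rule sg_joint_cont[where L="t+\<tau>"]) (auto intro!: Gc continuous_intros)
  have Fi: "F integrable_on {0..t+\<tau>}" using Fc integrable_continuous_interval by blast
  have split: "integral {0..t+\<tau>} F = integral {0..t} F + integral {t..t+\<tau>} F"
    using Henstock_Kurzweil_Integration.integral_combine[OF t _ Fi] tau by simp
  have c1: "continuous_on {0..t} (\<lambda>s. S (t - s) (G s))"
    by (rule sg_joint_cont[where L="t"]) (auto intro!: Gc continuous_intros)
  have i1: "(\<lambda>s. S (t - s) (G s)) integrable_on {0..t}" using c1 integrable_continuous_interval by blast
  have "integral {0..t} F = integral {0..t} (S \<tau> \<circ> (\<lambda>s. S (t - s) (G s)))"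
  proof (rule integral_cong)
    fix s assume "s \<in> {0..t}"
    then show "F s = (S \<tau> \<circ> (\<lambda>s. S (t - s) (G s))) s"
      unfolding F_def using sg_add[of \<tau> "t - s" "G s"] tau by (simp add: algebra_simps)
  qed
  also have "\<dots> = S \<tau> (integral {0..t} (\<lambda>s. S (t - s) (G s)))"
    by (rule integral_linear[OF i1 sg_lin[OF tau]])
  finally have p1: "integral {0..t} F = S \<tau> (integral {0..t} (\<lambda>s. S (t - s) (G s)))" .
  have "integral {t..t+\<tau>} F = integral {0 + t..\<tau> + t} F" by (simp add: add.commute)
  also have "\<dots> = integral {0..\<tau>} (F \<circ> (+) t)" by (rule integral_shift_Icc_real[symmetric])
  also have "\<dots> = integral {0..\<tau>} (\<lambda>s. S (\<tau> - s) (h ((t + s) powr r)))"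
    by (rule integral_cong) (simp add: F_def G_def algebra_simps)
  finally have p2: "integral {t..t+\<tau>} F = integral {0..\<tau>} (\<lambda>s. S (\<tau> - s) (h ((t + s) powr r)))" .
  have "S (t + \<tau>) y0 = S \<tau> (S t y0)" using sg_add[OF tau t, of y0] by (simp add: add.commute)
  moreover have Feq: "F = (\<lambda>s. S (t + \<tau> - s) (h (s powr r)))" by (auto simp: F_def G_def)
  ultimately show ?thesis
    unfolding mild_sol_def using split p1 p2 sg_plus[OF tau]
    by (simp add: Feq G_def)
qed

lemma err_rec:
  assumes hc: "continuous_on {0..} (\<lambda>s. h (s powr r))" and tau: "\<tau> > 0"
  shows "mild_sol S h r y0 (real (Suc n) * \<tau>) - eqrf1 S h r c1 \<tau> y0 (Suc n)
    = S \<tau> (mild_sol S h r y0 (real n * \<tau>) - eqrf1 S h r c1 \<tau> y0 n)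
      + integral {0..\<tau>} (\<lambda>s. S (\<tau> - s) (h ((real n * \<tau> + s) powr r) - h ((real n * \<tau> + c1 * \<tau>) powr r)))"
proof -
  define t where "t = real n * \<tau>"
  define v where "v = h ((real n * \<tau> + c1 * \<tau>) powr r)"
  have t0: "t \<ge> 0" using tau by (simp add: t_def)
  have Gc: "continuous_on U (\<lambda>s. h (s powr r))" if "U \<subseteq> {0..}" for U
    using continuous_on_subset[OF hc that] .
  have ca: "continuous_on {0..\<tau>} (\<lambda>s. S (\<tau> - s) (h ((t + s) powr r)))"
  proof (rule sg_joint_cont[where L=\<tau>])
    have "continuous_on {0..\<tau>} ((\<lambda>s. h (s powr r)) \<circ> (\<lambda>s. t + s))"
    proof (rule continuous_on_compose)
      show "continuous_on {0..\<tau>} ((+) t)" by (intro continuous_intros)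
      have "(+) t ` {0..\<tau>} \<subseteq> {0..}" using t0 by auto
      then show "continuous_on ((+) t ` {0..\<tau>}) (\<lambda>s. h (s powr r))" by (rule Gc)
    qed
    then show "continuous_on {0..\<tau>} (\<lambda>s. h ((t + s) powr r))" by (simp add: o_def)
  qed (auto intro!: continuous_intros)
  have cb: "continuous_on {0..\<tau>} (\<lambda>s. S (\<tau> - s) v)"
    by (rule sg_joint_cont[where L=\<tau>]) (auto intro!: continuous_intros)
  have phi: "\<tau> *\<^sub>R phi1 S \<tau> v = integral {0..\<tau>} (\<lambda>s. S (\<tau> - s) v)"
    unfolding phi1_def using tau by simp
  have "integral {0..\<tau>} (\<lambda>s. S (\<tau> - s) (h ((t + s) powr r) - v))
      = integral {0..\<tau>} (\<lambda>s. S (\<tau> - s) (h ((t + s) powr r)) - S (\<tau> - s) v)"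
    by (rule integral_cong) (simp add: sg_diff)
  also have "\<dots> = integral {0..\<tau>} (\<lambda>s. S (\<tau> - s) (h ((t + s) powr r))) - integral {0..\<tau>} (\<lambda>s. S (\<tau> - s) v)"
    by (rule integral_diff) (use ca cb integrable_continuous_interval in blast)+
  finally have I: "integral {0..\<tau>} (\<lambda>s. S (\<tau> - s) (h ((t + s) powr r) - v))
      = integral {0..\<tau>} (\<lambda>s. S (\<tau> - s) (h ((t + s) powr r))) - integral {0..\<tau>} (\<lambda>s. S (\<tau> - s) v)" .
  have "real (Suc n) * \<tau> = t + \<tau>" by (simp add: t_def algebra_simps)
  then show ?thesis
    using mild_step[OF hc t0, of \<tau> y0] tau I phi sg_diff[of \<tau>]
    by (simp add: t_def v_def)
qed

lemma err_0: "mild_sol S h r y0 (real 0 * \<tau>) - eqrf1 S h r c1 \<tau> y0 0 = 0"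
  by (simp add: mild_sol_def sg_0)

lemma accum:
  assumes tau: "\<tau> > 0" and M: "M \<ge> 0" "\<And>s y. s \<in> {0..L} \<Longrightarrow> norm (S s y) \<le> M * norm y"
    and e0: "e 0 = 0" and es: "\<And>n. e (Suc n) = S \<tau> (e n) + d n"
    and db: "\<And>n. norm (d n) \<le> b n"
    and n: "real n * \<tau> \<le> L"
  shows "norm (e n) \<le> M * (\<Sum>k<n. b k)"
proof -
  have "\<forall>j. real (j + n) * \<tau> \<le> L \<longrightarrow> norm (S (real j * \<tau>) (e n)) \<le> M * (\<Sum>k<n. b k)"
  proof (induction n)
    case 0
    then show ?case using e0 tau by (simp add: sg_zero)
  next
    case (Suc n)
    show ?case
    proof (intro allI impI)
      fix j assume jn: "real (j + Suc n) * \<tau> \<le> L"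
      have j0: "real j * \<tau> \<ge> 0" using tau by simp
      have jL: "real j * \<tau> \<in> {0..L}" using jn tau j0
        by (smt (verit, best) atLeastAtMost_iff le_add1 mult_right_mono of_nat_mono)
      have "S (real j * \<tau>) (e (Suc n)) = S (real j * \<tau>) (S \<tau> (e n)) + S (real j * \<tau>) (d n)"
        using es sg_plus j0 by simp
      also have "S (real j * \<tau>) (S \<tau> (e n)) = S (real (Suc j) * \<tau>) (e n)"
        using sg_add[OF j0, of \<tau>] tau by (simp add: algebra_simps)
      finally have eq: "S (real j * \<tau>) (e (Suc n)) = S (real (Suc j) * \<tau>) (e n) + S (real j * \<tau>) (d n)" .
      have "norm (S (real (Suc j) * \<tau>) (e n)) \<le> M * (\<Sum>k<n. b k)"
        using Suc.IH[rule_format, of "Suc j"] jn by (simp add: algebra_simps)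
      moreover have "norm (S (real j * \<tau>) (d n)) \<le> M * b n"
        using M(2)[OF jL, of "d n"] db[of n] M(1) by (meson mult_left_mono order_trans)
      ultimately have "norm (S (real j * \<tau>) (e (Suc n))) \<le> M * (\<Sum>k<n. b k) + M * b n"
        unfolding eq by (smt (verit) norm_triangle_ineq)
      then show "norm (S (real j * \<tau>) (e (Suc n))) \<le> M * (\<Sum>k<Suc n. b k)"
        by (simp add: algebra_simps)
    qed
  qed
  then show ?thesis using n by (auto simp: sg_0 dest: spec[of _ 0])
qed

lemma cont_shift:
  fixes h :: "real \<Rightarrow> 'a"
  assumes hc: "continuous_on {0..} (\<lambda>s. h (s powr r))" and t0: "t \<ge> 0"
  shows "continuous_on {0..\<tau>} (\<lambda>s. h ((t + s) powr r))"
proof -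
  have "continuous_on {0..\<tau>} ((\<lambda>s. h (s powr r)) \<circ> (\<lambda>s. t + s))"
  proof (rule continuous_on_compose)
    show "continuous_on {0..\<tau>} ((+) t)" by (intro continuous_intros)
    have "(+) t ` {0..\<tau>} \<subseteq> {0..}" using t0 by auto
    then show "continuous_on ((+) t ` {0..\<tau>}) (\<lambda>s. h (s powr r))" by (rule continuous_on_subset[OF hc])
  qed
  then show ?thesis by (simp add: o_def)
qed

lemma local1:
  fixes h :: "real \<Rightarrow> 'a"
  assumes hc: "continuous_on {0..} (\<lambda>s. h (s powr r))"
    and hL: "\<And>x y. x \<ge> 0 \<Longrightarrow> y \<ge> 0 \<Longrightarrow> norm (h x - h y) \<le> L1 * \<bar>x - y\<bar>" and L1: "L1 \<ge> 0"
    and M: "M \<ge> 0" "\<And>s y. s \<in> {0..\<tau>} \<Longrightarrow> norm (S s y) \<le> M * norm y"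
    and tau: "\<tau> > 0" and t0: "t \<ge> 0" and c1: "0 \<le> c1" "c1 \<le> 1" and r: "r \<ge> 0"
  shows "norm (integral {0..\<tau>} (\<lambda>s. S (\<tau> - s) (h ((t + s) powr r) - h ((t + c1 * \<tau>) powr r))))
    \<le> \<tau> * (M * (L1 * ((t + \<tau>) powr r - t powr r)))"
proof (rule int_bound)
  have "continuous_on {0..\<tau>} (\<lambda>s. S (\<tau> - s) (h ((t + s) powr r) - h ((t + c1 * \<tau>) powr r)))"
    by (rule sg_joint_cont[where L=\<tau>]) (auto intro!: continuous_intros cont_shift[OF hc t0])
  then show "(\<lambda>s. S (\<tau> - s) (h ((t + s) powr r) - h ((t + c1 * \<tau>) powr r))) integrable_on {0..\<tau>}"
    using integrable_continuous_interval by blast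
  show "\<tau> \<ge> 0" using tau by simp
  fix s assume s: "s \<in> {0..\<tau>}"
  have "norm (S (\<tau> - s) (h ((t + s) powr r) - h ((t + c1 * \<tau>) powr r))) \<le> M * norm (h ((t + s) powr r) - h ((t + c1 * \<tau>) powr r))"
    using M(2) s by auto
  also have "\<dots> \<le> M * (L1 * \<bar>(t + s) powr r - (t + c1 * \<tau>) powr r\<bar>)"
    using hL[of "(t + s) powr r" "(t + c1 * \<tau>) powr r"] M by (intro mult_left_mono) auto
  also have "\<dots> \<le> M * (L1 * ((t + \<tau>) powr r - t powr r))"
  proof -
    have "c1 * \<tau> \<le> \<tau>" using c1 tau by (simp add: mult_le_cancel_right1)
    then have "\<bar>(t + s) powr r - (t + c1 * \<tau>) powr r\<bar> \<le> (t + \<tau>) powr r - t powr r"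
      using s c1 tau t0 r by (intro powr_diff_le) auto
    then show ?thesis using M L1 by (intro mult_left_mono) auto
  qed
  finally show "norm (S (\<tau> - s) (h ((t + s) powr r) - h ((t + c1 * \<tau>) powr r))) \<le> M * (L1 * ((t + \<tau>) powr r - t powr r))" .
qed

lemma local2:
  fixes h h' :: "real \<Rightarrow> 'a"
  assumes gen: "semigroup_generator S D A"
    and hc: "continuous_on {0..} (\<lambda>s. h (s powr r))"
    and hd: "\<forall>x\<ge>0. (h has_vector_derivative h' x) (at x within {0..})"
    and h1b: "\<And>x. x \<ge> 0 \<Longrightarrow> norm (h' x) \<le> L1"
    and h2L: "\<And>x y. x \<ge> 0 \<Longrightarrow> y \<ge> 0 \<Longrightarrow> norm (h' x - h' y) \<le> L2 * \<bar>x - y\<bar>"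
    and L: "L1 \<ge> 0" "L2 \<ge> 0" "K \<ge> 0"
    and hD: "\<And>x. x \<ge> 0 \<Longrightarrow> h' x \<in> D" and AK: "\<And>x. x \<ge> 0 \<Longrightarrow> norm (A (h' x)) \<le> K"
    and M: "M \<ge> 0" "\<And>s y. s \<in> {0..\<tau>} \<Longrightarrow> norm (S s y) \<le> M * norm y"
    and tau: "\<tau> > 0" and t: "t \<ge> \<tau>" and c1: "c1 = 1 / 2" and r: "0 < r" "r < 1"
  shows "norm (integral {0..\<tau>} (\<lambda>s. S (\<tau> - s) (h ((t + s) powr r) - h ((t + c1 * \<tau>) powr r))))
    \<le> \<tau> * (\<tau> * \<tau> powr (r - 1) * (M * M * \<tau> * K))
      + \<tau> * (M * (\<tau> * (L1 * (t powr (r - 1) - (t + \<tau>) powr (r - 1))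
                       + \<tau> powr (r - 1) * L2 * ((t + \<tau>) powr r - t powr r))))"
proof -
  define m where "m = t + c1 * \<tau>"
  define G where "G y = h (y powr r)" for y
  define G' where "G' y = (r * y powr (r - 1)) *\<^sub>R h' (y powr r)" for y
  define I where "I = {t..t+\<tau>}"
  define Q where "Q = L1 * (t powr (r - 1) - (t + \<tau>) powr (r - 1)) + \<tau> powr (r - 1) * L2 * ((t + \<tau>) powr r - t powr r)"
  have tp: "t > 0" using tau t by simp
  have mI: "m \<in> I" using tau c1 by (simp add: m_def I_def)
  have Ipos: "\<And>y. y \<in> I \<Longrightarrow> y > 0" using tp by (auto simp: I_def)
  have deriv: "(G has_vector_derivative G' y) (at y within I)" if y: "y \<in> I" for y
  proof -
    have y0: "y > 0" using Ipos y .
    have f: "((\<lambda>y. y powr r) has_vector_derivative (r * y powr (r - 1))) (at y within I)"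
      using has_real_derivative_powr[OF y0, of r]
      by (simp add: has_real_derivative_iff_has_vector_derivative[symmetric] has_field_derivative_at_within)
    have "(h has_vector_derivative h' (y powr r)) (at (y powr r) within {0..})" using hd by simp
    then have g: "(h has_vector_derivative h' (y powr r)) (at (y powr r) within (\<lambda>y. y powr r) ` I)"
      by (rule has_vector_derivative_within_subset) auto
    have "((h \<circ> (\<lambda>y. y powr r)) has_vector_derivative (r * y powr (r - 1)) *\<^sub>R h' (y powr r)) (at y within I)"
      by (rule vector_diff_chain_within[OF f]) (use g in simp)
    moreover have "G = (\<lambda>y. h (y powr r))" by (simp add: G_def fun_eq_iff)
    ultimately show ?thesis by (simp add: G'_def o_def)
  qed
  have tau_pow: "y powr (r - 1) \<le> \<tau> powr (r - 1)" if "y \<ge> t" for y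
    using that t tau r by (intro powr_mono2') auto
  have Qb: "norm (G' y - G' m) \<le> Q" if y: "y \<in> I" for y
  proof -
    have "G' y - G' m = (r * (y powr (r - 1) - m powr (r - 1))) *\<^sub>R h' (y powr r)
        + (r * m powr (r - 1)) *\<^sub>R (h' (y powr r) - h' (m powr r))"
      unfolding G'_def by (simp add: algebra_simps scaleR_diff_left scaleR_diff_right)
    then have "norm (G' y - G' m) \<le> norm ((r * (y powr (r - 1) - m powr (r - 1))) *\<^sub>R h' (y powr r))
        + norm ((r * m powr (r - 1)) *\<^sub>R (h' (y powr r) - h' (m powr r)))"
      by (metis norm_triangle_ineq)
    also have "\<dots> = (r * \<bar>y powr (r - 1) - m powr (r - 1)\<bar>) * norm (h' (y powr r))
        + (r * m powr (r - 1)) * norm (h' (y powr r) - h' (m powr r))"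
      using r by (simp add: abs_mult)
    also have "\<dots> \<le> (1 * (t powr (r - 1) - (t + \<tau>) powr (r - 1))) * L1
        + (\<tau> powr (r - 1)) * (L2 * ((t + \<tau>) powr r - t powr r))"
    proof (rule add_mono)
      have a1: "\<bar>y powr (r - 1) - m powr (r - 1)\<bar> \<le> t powr (r - 1) - (t + \<tau>) powr (r - 1)"
        using y mI tp r by (intro powr_diff_le_neg) (auto simp: I_def)
      have a2: "r * \<bar>y powr (r - 1) - m powr (r - 1)\<bar> \<le> 1 * (t powr (r - 1) - (t + \<tau>) powr (r - 1))"
        using a1 r by (intro mult_mono) auto
      have a3: "(t + \<tau>) powr (r - 1) \<le> t powr (r - 1)" using tp tau r by (intro powr_mono2') auto
      show "(r * \<bar>y powr (r - 1) - m powr (r - 1)\<bar>) * norm (h' (y powr r)) \<le> (1 * (t powr (r - 1) - (t + \<tau>) powr (r - 1))) * L1"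
        by (rule mult_mono[OF a2 h1b]) (use a3 in auto)
      have b1: "r * m powr (r - 1) \<le> \<tau> powr (r - 1)"
      proof -
        have "m powr (r - 1) \<le> \<tau> powr (r - 1)" using mI by (intro tau_pow) (auto simp: I_def)
        moreover have "r * m powr (r - 1) \<le> 1 * m powr (r - 1)" using r by (intro mult_right_mono) auto
        ultimately show ?thesis by linarith
      qed
      have b2: "norm (h' (y powr r) - h' (m powr r)) \<le> L2 * ((t + \<tau>) powr r - t powr r)"
      proof -
        have "norm (h' (y powr r) - h' (m powr r)) \<le> L2 * \<bar>y powr r - m powr r\<bar>" by (rule h2L) auto
        also have "\<dots> \<le> L2 * ((t + \<tau>) powr r - t powr r)"
          using y mI tp r L by (intro mult_left_mono powr_diff_le) (auto simp: I_def)
        finally show ?thesis .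
      qed
      show "(r * m powr (r - 1)) * norm (h' (y powr r) - h' (m powr r)) \<le> \<tau> powr (r - 1) * (L2 * ((t + \<tau>) powr r - t powr r))"
        using b1 b2 r by (intro mult_mono) auto
    qed
    also have "\<dots> = Q" unfolding Q_def by (simp add: algebra_simps)
    finally show ?thesis .
  qed
  have Q0: "Q \<ge> 0" using Qb[OF mI] by simp
  define v where "v = G' m"
  define c where "c = r * m powr (r - 1)"
  define u where "u = h' (m powr r)"
  have vcu: "v = c *\<^sub>R u" by (simp add: v_def c_def u_def G'_def)
  have c0: "c \<ge> 0" "c \<le> \<tau> powr (r - 1)"
  proof -
    show "c \<ge> 0" using r by (simp add: c_def)
    have "m powr (r - 1) \<le> \<tau> powr (r - 1)" using mI by (intro tau_pow) (auto simp: I_def)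
    moreover have "r * m powr (r - 1) \<le> 1 * m powr (r - 1)" using r by (intro mult_right_mono) auto
    ultimately show "c \<le> \<tau> powr (r - 1)" unfolding c_def by linarith
  qed
  have uD: "u \<in> D" unfolding u_def by (rule hD) simp
  have uK: "norm (A u) \<le> K" unfolding u_def by (rule AK) simp
  define R where "R s = G (t + s) - G m - (s - \<tau> / 2) *\<^sub>R v" for s
  have Rb: "norm (R s) \<le> \<tau> * Q" if s: "s \<in> {0..\<tau>}" for s
  proof -
    have xm: "t + s - m = s - \<tau> / 2" by (simp add: m_def c1)
    have xI: "t + s \<in> I" using s by (auto simp: I_def)
    have "norm (G (t + s) - G m - (t + s - m) *\<^sub>R G' m) \<le> norm (t + s - m) * Q"
    proof (rule vector_differentiable_bound_linearization[where S=I])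
      show "\<And>x. x \<in> I \<Longrightarrow> (G has_vector_derivative G' x) (at x within I)" by (rule deriv)
      show "closed_segment m (t + s) \<subseteq> I" using xI mI by (auto simp: closed_segment_eq_real_ivl I_def)
      show "\<And>x. x \<in> I \<Longrightarrow> norm (G' x - G' m) \<le> Q" by (rule Qb)
      show "m \<in> I" by (rule mI)
    qed
    also have "\<dots> \<le> \<tau> * Q" using Q0 s by (intro mult_right_mono) (auto simp: xm)
    finally show ?thesis unfolding R_def v_def xm .
  qed
  define P1 where "P1 s = (s - \<tau> / 2) *\<^sub>R (S (\<tau> - s) v - S (\<tau> / 2) v)" for s
  define P2 where "P2 s = (s - \<tau> / 2) *\<^sub>R S (\<tau> / 2) v" for s
  define P3 where "P3 s = S (\<tau> - s) (R s)" for s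
  have Gc: "continuous_on {0..\<tau>} (\<lambda>s. G (t + s))" unfolding G_def
    using cont_shift[OF hc, of t \<tau>] tp by simp
  have cS: "continuous_on {0..\<tau>} (\<lambda>s. S (\<tau> - s) v)"
    by (rule sg_joint_cont[where L=\<tau>]) (auto intro!: continuous_intros)
  have i1: "P1 integrable_on {0..\<tau>}" unfolding P1_def
    by (rule integrable_continuous_interval) (auto intro!: continuous_intros cS)
  have i2: "P2 integrable_on {0..\<tau>}" unfolding P2_def
    by (rule integrable_continuous_interval) (auto intro!: continuous_intros)
  have i3: "P3 integrable_on {0..\<tau>}" unfolding P3_def R_def
    by (rule integrable_continuous_interval, rule sg_joint_cont[where L=\<tau>]) (auto intro!: continuous_intros Gc)
  have eq: "S (\<tau> - s) (h ((t + s) powr r) - h ((t + c1 * \<tau>) powr r)) = P1 s + P2 s + P3 s"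
    if s: "s \<in> {0..\<tau>}" for s
  proof -
    have s0: "\<tau> - s \<ge> 0" using s by simp
    have "h ((t + s) powr r) - h ((t + c1 * \<tau>) powr r) = (s - \<tau> / 2) *\<^sub>R v + R s"
      by (simp add: R_def G_def m_def)
    then have "S (\<tau> - s) (h ((t + s) powr r) - h ((t + c1 * \<tau>) powr r)) = (s - \<tau> / 2) *\<^sub>R S (\<tau> - s) v + P3 s"
      using sg_plus[OF s0] sg_scale[OF s0] by (simp add: P3_def)
    then show ?thesis by (simp add: P1_def P2_def algebra_simps)
  qed
  have "integral {0..\<tau>} (\<lambda>s. S (\<tau> - s) (h ((t + s) powr r) - h ((t + c1 * \<tau>) powr r)))
      = integral {0..\<tau>} (\<lambda>s. P1 s + P2 s + P3 s)"
    by (rule integral_cong) (rule eq)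
  also have "\<dots> = integral {0..\<tau>} P1 + integral {0..\<tau>} P2 + integral {0..\<tau>} P3"
    using i1 i2 i3 by (simp add: integral_add integrable_add)
  also have "integral {0..\<tau>} P2 = 0"
  proof -
    have "((\<lambda>s. s - \<tau> / 2) has_integral ((\<lambda>s. s * s / 2 - \<tau> * s / 2) \<tau> - (\<lambda>s. s * s / 2 - \<tau> * s / 2) 0)) {0..\<tau>}"
    proof (rule fundamental_theorem_of_calculus)
      show "0 \<le> \<tau>" using tau by simp
      fix x assume "x \<in> {0..\<tau>}"
      have "((\<lambda>s. s * s / 2 - \<tau> * s / 2) has_real_derivative (x - \<tau> / 2)) (at x within {0..\<tau>})"
        by (auto intro!: derivative_eq_intros simp: field_simps)
      then show "((\<lambda>s. s * s / 2 - \<tau> * s / 2) has_vector_derivative x - \<tau> / 2) (at x within {0..\<tau>})"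
        by (simp add: has_real_derivative_iff_has_vector_derivative)
    qed
    then have "((\<lambda>s. s - \<tau> / 2) has_integral 0) {0..\<tau>}" by simp
    then have "(P2 has_integral 0 *\<^sub>R S (\<tau> / 2) v) {0..\<tau>}" unfolding P2_def
      by (rule has_integral_scaleR_left)
    then show ?thesis by (simp add: integral_unique)
  qed
  finally have ieq: "integral {0..\<tau>} (\<lambda>s. S (\<tau> - s) (h ((t + s) powr r) - h ((t + c1 * \<tau>) powr r)))
      = integral {0..\<tau>} P1 + integral {0..\<tau>} P3" by simp
  have n1: "norm (integral {0..\<tau>} P1) \<le> \<tau> * (\<tau> * \<tau> powr (r - 1) * (M * M * \<tau> * K))"
  proof (rule int_bound[OF i1])
    show "\<tau> \<ge> 0" using tau by simp
    fix s assume s: "s \<in> {0..\<tau>}"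
    have a: "\<tau> - s \<in> {0..\<tau>}" "\<tau> / 2 \<in> {0..\<tau>}" using s tau by auto
    have "S (\<tau> - s) v - S (\<tau> / 2) v = c *\<^sub>R (S (\<tau> - s) u - S (\<tau> / 2) u)"
      using a sg_scale by (simp add: vcu scaleR_diff_right)
    then have "norm (P1 s) = \<bar>s - \<tau> / 2\<bar> * (c * norm (S (\<tau> - s) u - S (\<tau> / 2) u))"
      using c0 by (simp add: P1_def abs_mult)
    also have "\<dots> \<le> \<tau> * (\<tau> powr (r - 1) * (M * M * \<tau> * K))"
    proof (rule mult_mono)
      show "\<bar>s - \<tau> / 2\<bar> \<le> \<tau>" using s tau by auto
      have "norm (S (\<tau> - s) u - S (\<tau> / 2) u) \<le> M * M * \<bar>(\<tau> - s) - \<tau> / 2\<bar> * norm (A u)"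
        by (rule sg_gen_lip2[OF gen uD M a])
      also have "\<dots> \<le> M * M * \<tau> * K"
        using s tau uK M L by (intro mult_mono) auto
      finally have "norm (S (\<tau> - s) u - S (\<tau> / 2) u) \<le> M * M * \<tau> * K" .
      then show "c * norm (S (\<tau> - s) u - S (\<tau> / 2) u) \<le> \<tau> powr (r - 1) * (M * M * \<tau> * K)"
        using c0 by (intro mult_mono) auto
    qed (use tau c0 in auto)
    finally show "norm (P1 s) \<le> \<tau> * \<tau> powr (r - 1) * (M * M * \<tau> * K)" by (simp add: mult.assoc)
  qed
  have n3: "norm (integral {0..\<tau>} P3) \<le> \<tau> * (M * (\<tau> * Q))"
  proof (rule int_bound[OF i3])
    show "\<tau> \<ge> 0" using tau by simp
    fix s assume s: "s \<in> {0..\<tau>}"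
    have "norm (P3 s) \<le> M * norm (R s)" unfolding P3_def using M(2) s by auto
    also have "\<dots> \<le> M * (\<tau> * Q)" using Rb[OF s] M by (intro mult_left_mono) auto
    finally show "norm (P3 s) \<le> M * (\<tau> * Q)" .
  qed
  show ?thesis unfolding ieq using n1 n3 norm_triangle_ineq[of "integral {0..\<tau>} P1" "integral {0..\<tau>} P3"]
    unfolding Q_def by linarith
qed

end


lemma tau_pow1: "(\<tau>::real) > 0 \<Longrightarrow> \<tau> * \<tau> powr r = \<tau> powr (1 + r)"
  by (simp add: powr_add)

lemma tau_pow2: "(\<tau>::real) > 0 \<Longrightarrow> \<tau> * \<tau> * \<tau> powr (r - 1) = \<tau> powr (1 + r)"
proof -
  assume t: "\<tau> > 0"
  have "\<tau> powr (1 + r) = \<tau> powr (2 + (r - 1))" by simp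
  also have "\<dots> = \<tau> powr 2 * \<tau> powr (r - 1)" by (rule powr_add)
  also have "\<tau> powr 2 = \<tau> * \<tau>" using t by (simp add: power2_eq_square)
  finally show ?thesis by simp
qed

lemma tele: "(\<Sum>k<n. (f (Suc k) - f k)::real) = f n - f 0"
  by (induction n) auto

theorem theorem1:
  fixes S :: "real \<Rightarrow> 'a::banach \<Rightarrow> 'a" and A :: "'a \<Rightarrow> 'a" and D :: "'a set"
    and h h' h'' :: "real \<Rightarrow> 'a" and T r c1 :: real
  assumes sg: "strongly_continuous_semigroup S"
    and gen: "semigroup_generator S D A"
    and T: "T > 0" and r: "0 < r" "r < 1" and c1: "0 \<le> c1" "c1 \<le> 1"
    and hd: "\<forall>x\<ge>0. (h has_vector_derivative h' x) (at x within {0..})"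
    and hdb: "bounded (h' ` {0..})"
  shows
    "(\<exists>C. \<forall>y0 N n. N \<ge> 1 \<longrightarrow> n \<le> N \<longrightarrow>
        norm (mild_sol S h r y0 (real n * (T / real N)) - eqrf1 S h r c1 (T / real N) y0 n)
          \<le> C * (T / real N))
     \<and>
     ((\<forall>x\<ge>0. (h' has_vector_derivative h'' x) (at x within {0..})) \<and>
      bounded (h'' ` {0..}) \<and>
      (\<forall>x\<ge>0. h' x \<in> D) \<and>
      bounded ((\<lambda>x. A (h' x)) ` {0..}) \<and>
      c1 = 1 / 2
      \<longrightarrow>
      (\<exists>C. \<forall>y0 N n. N \<ge> 1 \<longrightarrow> n \<le> N \<longrightarrow>
        norm (mild_sol S h r y0 (real n * (T / real N)) - eqrf1 S h r c1 (T / real N) y0 n)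
          \<le> C * (T / real N) powr (1 + r)))"
proof -
  obtain M where M1: "M \<ge> 1" and MT: "\<And>s y. s \<in> {0..T} \<Longrightarrow> norm (S s y) \<le> M * norm y"
    using sg_bound[OF sg, of T] by blast
  have M0: "M \<ge> 0" using M1 by simp
  obtain L1 where L1: "L1 > 0" "\<And>x. x \<ge> 0 \<Longrightarrow> norm (h' x) \<le> L1"
    using hdb unfolding bounded_pos by auto
  have hL: "\<And>x y. x \<ge> 0 \<Longrightarrow> y \<ge> 0 \<Longrightarrow> norm (h x - h y) \<le> L1 * \<bar>x - y\<bar>"
    by (rule lip_deriv[OF hd]) (use L1 in auto)
  have hcont: "continuous_on {0..} h"
    unfolding continuous_on_eq_continuous_within
    using hd has_vector_derivative_continuous by blast
  have pc: "continuous_on {0..} (\<lambda>s::real. s powr r)"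
    by (rule continuous_on_powr') (use r in \<open>auto intro!: continuous_intros\<close>)
  have hc: "continuous_on {0..} (\<lambda>s. h (s powr r))"
    by (rule continuous_on_compose2[OF hcont pc]) auto
  have stp: "\<tau> > 0 \<and> real n * \<tau> \<le> T \<and> \<tau> \<le> T" if N: "N \<ge> 1" "n \<le> N" and tdef: "\<tau> = T / real N" for N n :: nat and \<tau>
  proof -
    have Np: "real N \<ge> 1" using N by simp
    have a: "\<tau> > 0" using T tdef Np by simp
    have "T / real N \<le> T / 1" using Np T by (intro divide_left_mono) auto
    then have b: "\<tau> \<le> T" using tdef by simp
    have "real n * \<tau> \<le> real N * \<tau>" using N a by (intro mult_right_mono) auto
    also have "real N * \<tau> = T" using tdef Np by simp
    finally show ?thesis using a b by simp
  qed
  define e where "e y0 \<tau> k = mild_sol S h r y0 (real k * \<tau>) - eqrf1 S h r c1 \<tau> y0 k" for y0 \<tau> k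
  define d where "d \<tau> k = integral {0..\<tau>} (\<lambda>s. S (\<tau> - s) (h ((real k * \<tau> + s) powr r) - h ((real k * \<tau> + c1 * \<tau>) powr r)))" for \<tau> k
  have e0: "e y0 \<tau> 0 = 0" for y0 \<tau> unfolding e_def using err_0[OF sg] by simp
  have es: "e y0 \<tau> (Suc k) = S \<tau> (e y0 \<tau> k) + d \<tau> k" if "\<tau> > 0" for y0 \<tau> k
    unfolding e_def d_def using err_rec[OF sg hc that] by simp
  have Mtau: "\<And>s y. s \<in> {0..\<tau>} \<Longrightarrow> norm (S s y) \<le> M * norm y" if "\<tau> \<le> T" for \<tau>
    using MT that by auto
  have part1: "\<exists>C. \<forall>y0 N n. N \<ge> 1 \<longrightarrow> n \<le> N \<longrightarrow>
        norm (mild_sol S h r y0 (real n * (T / real N)) - eqrf1 S h r c1 (T / real N) y0 n)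
          \<le> C * (T / real N)"
  proof (intro exI[of _ "M * M * L1 * T powr r"] allI impI)
    fix y0 :: 'a and N n :: nat
    assume N: "N \<ge> 1" "n \<le> N"
    define \<tau> where "\<tau> = T / real N"
    have st: "\<tau> > 0" "real n * \<tau> \<le> T" "\<tau> \<le> T" using stp[OF N \<tau>_def] by auto
    define F where "F k = (real k * \<tau>) powr r" for k
    define b where "b k = \<tau> * (M * (L1 * (F (Suc k) - F k)))" for k
    have db: "norm (d \<tau> k) \<le> b k" for k
    proof -
      have "norm (d \<tau> k) \<le> \<tau> * (M * (L1 * ((real k * \<tau> + \<tau>) powr r - (real k * \<tau>) powr r)))"
        unfolding d_def
        by (rule local1[OF sg hc hL _ M0 Mtau[OF st(3)] st(1) _ c1]) (use L1 r st in auto)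
      then show ?thesis by (simp add: b_def F_def algebra_simps)
    qed
    have "norm (e y0 \<tau> n) \<le> M * (\<Sum>k<n. b k)"
      by (rule accum[OF sg st(1) M0 MT e0 es db st(2)]) (use st in auto)
    also have "(\<Sum>k<n. b k) = \<tau> * (M * (L1 * (F n - F 0)))"
      unfolding b_def by (simp add: sum_distrib_left[symmetric] tele)
    also have "F n - F 0 \<le> T powr r"
      unfolding F_def using st r by (simp add: powr_mono2)
    then have "M * (\<tau> * (M * (L1 * (F n - F 0)))) \<le> M * (\<tau> * (M * (L1 * T powr r)))"
      using M0 L1 st by (intro mult_left_mono) auto
    finally show "norm (mild_sol S h r y0 (real n * (T / real N)) - eqrf1 S h r c1 (T / real N) y0 n)
          \<le> M * M * L1 * T powr r * (T / real N)"
      unfolding e_def \<tau>_def by (simp add: algebra_simps)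
  qed
  have part2: "\<exists>C. \<forall>y0 N n. N \<ge> 1 \<longrightarrow> n \<le> N \<longrightarrow>
        norm (mild_sol S h r y0 (real n * (T / real N)) - eqrf1 S h r c1 (T / real N) y0 n)
          \<le> C * (T / real N) powr (1 + r)"
    if H: "(\<forall>x\<ge>0. (h' has_vector_derivative h'' x) (at x within {0..}))"
      "bounded (h'' ` {0..})" "(\<forall>x\<ge>0. h' x \<in> D)" "bounded ((\<lambda>x. A (h' x)) ` {0..})" "c1 = 1 / 2"
  proof -
    obtain L2 where L2: "L2 > 0" "\<And>x. x \<ge> 0 \<Longrightarrow> norm (h'' x) \<le> L2"
      using H(2) unfolding bounded_pos by auto
    obtain K where K: "K > 0" "\<And>x. x \<ge> 0 \<Longrightarrow> norm (A (h' x)) \<le> K"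
      using H(4) unfolding bounded_pos by auto
    have h'L: "\<And>x y. x \<ge> 0 \<Longrightarrow> y \<ge> 0 \<Longrightarrow> norm (h' x - h' y) \<le> L2 * \<bar>x - y\<bar>"
      by (rule lip_deriv[OF H(1)]) (use L2 in auto)
    show ?thesis
    proof (intro exI[of _ "M * (M * L1 + T * (M * M * K) + M * L1 + M * L2 * T powr r)"] allI impI)
      fix y0 :: 'a and N n :: nat
      assume N: "N \<ge> 1" "n \<le> N"
      define \<tau> where "\<tau> = T / real N"
      have st: "\<tau> > 0" "real n * \<tau> \<le> T" "\<tau> \<le> T" using stp[OF N \<tau>_def] by auto
      define F where "F k = (real k * \<tau>) powr r" for k
      define G where "G k = (real (max k 1) * \<tau>) powr (r - 1)" for k
      define b where "b k = (if k = 0 then \<tau> * (M * (L1 * \<tau> powr r)) else 0)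
          + \<tau> * (\<tau> * \<tau> powr (r - 1) * (M * M * \<tau> * K))
          + \<tau> * (M * (\<tau> * (L1 * (G k - G (Suc k)) + \<tau> powr (r - 1) * L2 * (F (Suc k) - F k))))" for k
      have Gm: "G (Suc k) \<le> G k" for k
        unfolding G_def using st r by (intro powr_mono2') auto
      have Fm: "F k \<le> F (Suc k)" for k
        unfolding F_def using st r by (intro powr_mono2) auto
      have nn3: "0 \<le> \<tau> * (M * (\<tau> * (L1 * (G k - G (Suc k)) + \<tau> powr (r - 1) * L2 * (F (Suc k) - F k))))" for k
        using st M0 L1 L2 Gm[of k] Fm[of k] by (intro mult_nonneg_nonneg add_nonneg_nonneg) auto
      have nn2: "0 \<le> \<tau> * (\<tau> * \<tau> powr (r - 1) * (M * M * \<tau> * K))"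
        using st M0 K by simp
      have db: "norm (d \<tau> k) \<le> b k" for k
      proof (cases "k = 0")
        case True
        have "norm (d \<tau> k) \<le> \<tau> * (M * (L1 * ((real k * \<tau> + \<tau>) powr r - (real k * \<tau>) powr r)))"
          unfolding d_def
          by (rule local1[OF sg hc hL _ M0 Mtau[OF st(3)] st(1) _ c1]) (use L1 r st in auto)
        then have "norm (d \<tau> k) \<le> \<tau> * (M * (L1 * \<tau> powr r))" using True r by simp
        then show ?thesis unfolding b_def using True nn2 nn3[of k] by simp
      next
        case False
        then have k1: "k \<ge> 1" by simp
        have tk: "real k * \<tau> \<ge> \<tau>" using k1 st by simp
        have "norm (d \<tau> k) \<le> \<tau> * (\<tau> * \<tau> powr (r - 1) * (M * M * \<tau> * K))
            + \<tau> * (M * (\<tau> * (L1 * ((real k * \<tau>) powr (r - 1) - (real k * \<tau> + \<tau>) powr (r - 1))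
                       + \<tau> powr (r - 1) * L2 * ((real k * \<tau> + \<tau>) powr r - (real k * \<tau>) powr r))))"
          unfolding d_def
          by (rule local2[OF sg gen hc hd L1(2) h'L _ _ _ _ K(2) M0 Mtau[OF st(3)] st(1) tk H(5) r])
             (use L1 L2 K H(3) in auto)
        moreover have "G k = (real k * \<tau>) powr (r - 1)" "G (Suc k) = (real k * \<tau> + \<tau>) powr (r - 1)"
          "F k = (real k * \<tau>) powr r" "F (Suc k) = (real k * \<tau> + \<tau>) powr r"
          using k1 by (auto simp: G_def F_def max_def algebra_simps)
        ultimately show ?thesis unfolding b_def using False by simp
      qed
      have "norm (e y0 \<tau> n) \<le> M * (\<Sum>k<n. b k)"
        by (rule accum[OF sg st(1) M0 MT e0 es db st(2)]) (use st in auto)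
      also have "(\<Sum>k<n. b k) \<le> \<tau> * (M * (L1 * \<tau> powr r))
          + real n * (\<tau> * (\<tau> * \<tau> powr (r - 1) * (M * M * \<tau> * K)))
          + \<tau> * (M * (\<tau> * (L1 * (G 0 - G n) + \<tau> powr (r - 1) * L2 * (F n - F 0))))"
      proof -
        have s1: "(\<Sum>k<n. (if k = 0 then \<tau> * (M * (L1 * \<tau> powr r)) else 0)) \<le> \<tau> * (M * (L1 * \<tau> powr r))"
          using st M0 L1 by (simp add: sum.delta)
        have s3: "(\<Sum>k<n. \<tau> * (M * (\<tau> * (L1 * (G k - G (Suc k)) + \<tau> powr (r - 1) * L2 * (F (Suc k) - F k)))))
            = \<tau> * (M * (\<tau> * (L1 * (G 0 - G n) + \<tau> powr (r - 1) * L2 * (F n - F 0))))"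
        proof -
          have a: "(\<Sum>k<n. G k - G (Suc k)) = G 0 - G n" by (induction n) auto
          have "(\<Sum>k<n. \<tau> * (M * (\<tau> * (L1 * (G k - G (Suc k)) + \<tau> powr (r - 1) * L2 * (F (Suc k) - F k)))))
              = \<tau> * (M * (\<tau> * (L1 * (\<Sum>k<n. G k - G (Suc k)) + \<tau> powr (r - 1) * L2 * (\<Sum>k<n. F (Suc k) - F k))))"
          proof -
            have "(\<Sum>k<n. \<tau> * (M * (\<tau> * (L1 * (G k - G (Suc k)) + \<tau> powr (r - 1) * L2 * (F (Suc k) - F k)))))
                = \<tau> * (M * (\<tau> * (\<Sum>k<n. L1 * (G k - G (Suc k)) + \<tau> powr (r - 1) * L2 * (F (Suc k) - F k))))"
              by (simp add: sum_distrib_left)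
            also have "(\<Sum>k<n. L1 * (G k - G (Suc k)) + \<tau> powr (r - 1) * L2 * (F (Suc k) - F k))
                = L1 * (\<Sum>k<n. G k - G (Suc k)) + \<tau> powr (r - 1) * L2 * (\<Sum>k<n. F (Suc k) - F k)"
              by (simp add: sum.distrib sum_distrib_left)
            finally show ?thesis .
          qed
          then show ?thesis using a tele[of F n] by simp
        qed
        have "(\<Sum>k<n. b k) = (\<Sum>k<n. (if k = 0 then \<tau> * (M * (L1 * \<tau> powr r)) else 0))
            + real n * (\<tau> * (\<tau> * \<tau> powr (r - 1) * (M * M * \<tau> * K)))
            + (\<Sum>k<n. \<tau> * (M * (\<tau> * (L1 * (G k - G (Suc k)) + \<tau> powr (r - 1) * L2 * (F (Suc k) - F k)))))"
          unfolding b_def by (simp add: sum.distrib)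
        then show ?thesis using s1 s3 by linarith
      qed
      also have "\<dots> \<le> \<tau> * (M * (L1 * \<tau> powr r))
          + T * (\<tau> * \<tau> powr (r - 1) * (M * M * \<tau> * K))
          + \<tau> * (M * (\<tau> * (L1 * \<tau> powr (r - 1) + \<tau> powr (r - 1) * L2 * T powr r)))"
      proof -
        have x1: "real n * \<tau> \<le> T" using st by simp
        have "real n * (\<tau> * (\<tau> * \<tau> powr (r - 1) * (M * M * \<tau> * K))) = (real n * \<tau>) * (\<tau> * \<tau> powr (r - 1) * (M * M * \<tau> * K))"
          by simp
        also have "\<dots> \<le> T * (\<tau> * \<tau> powr (r - 1) * (M * M * \<tau> * K))"
          using x1 st M0 K by (intro mult_right_mono) auto
        finally have y1: "real n * (\<tau> * (\<tau> * \<tau> powr (r - 1) * (M * M * \<tau> * K))) \<le> T * (\<tau> * \<tau> powr (r - 1) * (M * M * \<tau> * K))" .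
        have g0: "G 0 = \<tau> powr (r - 1)" by (simp add: G_def)
        have gn: "G n \<ge> 0" by (simp add: G_def)
        have f0: "F 0 = 0" using r by (simp add: F_def)
        have fn: "F n \<le> T powr r" unfolding F_def using st r by (simp add: powr_mono2)
        have "L1 * (G 0 - G n) + \<tau> powr (r - 1) * L2 * (F n - F 0) \<le> L1 * \<tau> powr (r - 1) + \<tau> powr (r - 1) * L2 * T powr r"
        proof -
          have "L1 * (G 0 - G n) \<le> L1 * \<tau> powr (r - 1)" using g0 gn L1 by (simp add: mult_left_mono)
          moreover have "\<tau> powr (r - 1) * L2 * (F n - F 0) \<le> \<tau> powr (r - 1) * L2 * T powr r"
            using f0 fn L2 by (intro mult_left_mono) auto
          ultimately show ?thesis by linarith
        qed
        then have y2: "\<tau> * (M * (\<tau> * (L1 * (G 0 - G n) + \<tau> powr (r - 1) * L2 * (F n - F 0))))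
            \<le> \<tau> * (M * (\<tau> * (L1 * \<tau> powr (r - 1) + \<tau> powr (r - 1) * L2 * T powr r)))"
          using st M0 by (intro mult_left_mono) auto
        show ?thesis using y1 y2 by linarith
      qed
      also have "\<dots> = (M * L1 + T * (M * M * K) + M * L1 + M * L2 * T powr r) * \<tau> powr (1 + r)"
      proof -
        have p1: "\<tau> * \<tau> powr r = \<tau> powr (1 + r)" using tau_pow1[OF st(1)] .
        have p2: "\<tau> * \<tau> * \<tau> powr (r - 1) = \<tau> powr (1 + r)" using tau_pow2[OF st(1)] .
        have q1: "\<tau> * (M * (L1 * \<tau> powr r)) = M * L1 * \<tau> powr (1 + r)"
        proof -
          have "\<tau> * (M * (L1 * \<tau> powr r)) = M * L1 * (\<tau> * \<tau> powr r)" by (simp add: algebra_simps)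
          then show ?thesis by (simp only: p1)
        qed
        have q2: "T * (\<tau> * \<tau> powr (r - 1) * (M * M * \<tau> * K)) = T * (M * M * K) * \<tau> powr (1 + r)"
        proof -
          have "T * (\<tau> * \<tau> powr (r - 1) * (M * M * \<tau> * K)) = T * (M * M * K) * (\<tau> * \<tau> * \<tau> powr (r - 1))"
            by (simp add: algebra_simps)
          then show ?thesis by (simp only: p2)
        qed
        have q3: "\<tau> * (M * (\<tau> * (L1 * \<tau> powr (r - 1) + \<tau> powr (r - 1) * L2 * T powr r)))
            = (M * L1 + M * L2 * T powr r) * \<tau> powr (1 + r)"
        proof -
          have "\<tau> * (M * (\<tau> * (L1 * \<tau> powr (r - 1) + \<tau> powr (r - 1) * L2 * T powr r)))
            = (M * L1 + M * L2 * T powr r) * (\<tau> * \<tau> * \<tau> powr (r - 1))"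
            by (simp add: algebra_simps)
          then show ?thesis by (simp only: p2)
        qed
        show ?thesis unfolding q1 q2 q3 by (simp add: algebra_simps)
      qed
      finally have "norm (e y0 \<tau> n) \<le> M * ((M * L1 + T * (M * M * K) + M * L1 + M * L2 * T powr r) * \<tau> powr (1 + r))"
        using M0 by (simp add: mult_left_mono)
      then show "norm (mild_sol S h r y0 (real n * (T / real N)) - eqrf1 S h r c1 (T / real N) y0 n)
          \<le> M * (M * L1 + T * (M * M * K) + M * L1 + M * L2 * T powr r) * (T / real N) powr (1 + r)"
        unfolding e_def \<tau>_def by (simp add: algebra_simps)
    qed
  qed
  show ?thesis using part1 part2 by blast
qed

end
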